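(* Let $X$ be a compact Hausdorff space, $\mathcal F$ a left ultrafunctor from $X$ to $\mathsf{k\text{-}CompMet}$, and $E=\coprod_{x\in X}\mathcal F(x)$ with the topology $\tau$. A subset $C\subseteq E$, written $C=\coprod_{x\in X}U(x)$ with $U(x)=C\cap\mathcal F(x)$, is $\tau$-open if and only if: for every ultrafilter $\mu$ on $X$ converging to a point $x\in\pi(C)$ and every $g\in U(x)$, if $(b_y)_{y\in X}$ is a representative of $\sigma_\mu(g)\in\int_X\mathcal F(y)\,d\mu$, then there exist $W\in\mu$ and $\epsilon>0$ such that $B(b_y,\epsilon)\subseteq U(y)$ for all $y\in W$ (i.e. $\coprod_{y\in W}B(b_y,\epsilon)\subseteq C$). (The existence of such $W,\epsilon$ does not depend on the representative.)
   Context: Ultrafilter conventions: pushforward $g\mu=\{B:g^{-1}(B)\in\mu\}$; for compact Hausdorff $X$, $\int_Sx_sd\mu$ is the limit of the pushforward of $\mu$ along $s\mapsto x_s$; $\int_S\nu_sd\mu$ is the ultrafilter with $B\in\int_S\nu_sd\mu$ iff $\{s:B\in\nu_s\}\in\mu$. $\mathsf{k\text{-}CompMet}$: complete metric spaces with distances $\le k$, 1-Lipschitz maps; metric ultraproduct $\int_SM_sd\mu=\prod M_s/\{\lim_\mu d(a_s,b_s)=0\}$ with metric $\lim_\mu d(a_s,b_s)$. A left ultrafunctor $\mathcal F$ from $X$ to $\mathsf{k\text{-}CompMet}$ assigns objects $\mathcal F(x)$ and 1-Lipschitz maps $\sigma_\mu:\mathcal F(\int_Sx_sd\mu)\to\int_S\mathcal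 F(x_s)d\mu$ for all sets $S$, families $(x_s)$ in $X$ and ultrafilters $\mu$ on $S$, compatible with principal ultrafilters and with the Fubini maps $\Delta((b_t)_t)=((b_t)_t)_s$ (i.e. $\Delta\circ\sigma_{\int_S\nu_sd\mu}=(\int_S\sigma_{\nu_s}d\mu)\circ\sigma_\mu$). For an ultrafilter $\mu$ on $X$, $\sigma_\mu$ refers to the identity family on $X$. $\tau$ is the unique topology on $E$ in which an ultrafilter $\eta$ on $E$ converges to $f$ iff $\pi\eta$ converges to $\pi(f)$ and, for a representative $(b_x)$ of $\sigma_{\pi\eta}(f)$, $\coprod_xB(b_x,\epsilon)\in\eta$ for all $\epsilon>0$. $B(b,\epsilon)$ is the open metric ball in the fibre containing $b$. *)

theory Defs
  imports "HOL-Analysis.Analysis"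
begin

definition ultrafilter_on :: "'s set \<Rightarrow> 's set set \<Rightarrow> bool" where
  "ultrafilter_on S \<mu> \<longleftrightarrow> \<mu> \<subseteq> Pow S \<and> S \<in> \<mu> \<and> {} \<notin> \<mu> \<and>
     (\<forall>A B. A \<in> \<mu> \<longrightarrow> B \<in> \<mu> \<longrightarrow> A \<inter> B \<in> \<mu>) \<and>
     (\<forall>A B. A \<in> \<mu> \<longrightarrow> A \<subseteq> B \<longrightarrow> B \<subseteq> S \<longrightarrow> B \<in> \<mu>) \<and>
     (\<forall>A. A \<subseteq> S \<longrightarrow> A \<in> \<mu> \<or> S - A \<in> \<mu>)"

definition pushforward :: "'s set \<Rightarrow> ('s \<Rightarrow> 't) \<Rightarrow> 't set \<Rightarrow> 's set set \<Rightarrow> 't set set" where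
  "pushforward S g T \<mu> = {B. B \<subseteq> T \<and> {s\<in>S. g s \<in> B} \<in> \<mu>}"

definition principal_uf :: "'s set \<Rightarrow> 's \<Rightarrow> 's set set" where
  "principal_uf S s0 = {A. A \<subseteq> S \<and> s0 \<in> A}"

definition uf_integral :: "'s set \<Rightarrow> ('s \<Rightarrow> 't set set) \<Rightarrow> 's set set \<Rightarrow> 't set set" where
  "uf_integral S \<nu> \<mu> = {B. {s\<in>S. B \<in> \<nu> s} \<in> \<mu>}"

definition uconv :: "'x topology \<Rightarrow> 'x set set \<Rightarrow> 'x \<Rightarrow> bool" where
  "uconv X \<mu> x \<longleftrightarrow> x \<in> topspace X \<and> (\<forall>U. openin X U \<longrightarrow> x \<in> U \<longrightarrow> U \<in> \<mu>)"

text \<open>The point \<open>\<integral>_S x_s d\<mu>\<close>: the limit of the pushforward of mu along s |-> x_s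
  (unique for compact Hausdorff X).\<close>
definition pt_integral :: "'x topology \<Rightarrow> 's set \<Rightarrow> ('s \<Rightarrow> 'x) \<Rightarrow> 's set set \<Rightarrow> 'x" where
  "pt_integral X S xs \<mu> = (THE x. uconv X (pushforward S xs (topspace X) \<mu>) x)"

definition ulim_real :: "'s set \<Rightarrow> 's set set \<Rightarrow> ('s \<Rightarrow> real) \<Rightarrow> real" where
  "ulim_real S \<mu> r = (THE L. \<forall>e>0. {s\<in>S. \<bar>r s - L\<bar> < e} \<in> \<mu>)"

section \<open>Metric ultraproducts (elements are represented by families)\<close>

definition uprod_elem :: "'s set \<Rightarrow> ('s \<Rightarrow> 'a metric) \<Rightarrow> ('s \<Rightarrow> 'a) \<Rightarrow> bool" where
  "uprod_elem S M b \<longleftrightarrow> (\<forall>s\<in>S. b s \<in> mspace (M s))"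

definition uprod_dist :: "'s set \<Rightarrow> 's set set \<Rightarrow> ('s \<Rightarrow> 'a metric) \<Rightarrow> ('s \<Rightarrow> 'a) \<Rightarrow> ('s \<Rightarrow> 'a) \<Rightarrow> real" where
  "uprod_dist S \<mu> M a b = ulim_real S \<mu> (\<lambda>s. mdist (M s) (a s) (b s))"

text \<open>b is a representative of the class of c in \<open>\<integral>_S M_s d\<mu>\<close>.\<close>
definition is_rep :: "'s set \<Rightarrow> 's set set \<Rightarrow> ('s \<Rightarrow> 'a metric) \<Rightarrow> ('s \<Rightarrow> 'a) \<Rightarrow> ('s \<Rightarrow> 'a) \<Rightarrow> bool" where
  "is_rep S \<mu> M c b \<longleftrightarrow> uprod_elem S M b \<and> uprod_dist S \<mu> M b c = 0"

text \<open>sigma S xs mu a returns a representative family of \<open>\<sigma>_\<mu>(a)\<close>.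
  Index sets S, T range over subsets of the type 'i.\<close>
definition left_ultrafunctor ::
  "real \<Rightarrow> 'x topology \<Rightarrow> ('x \<Rightarrow> 'a metric) \<Rightarrow>
   ('i set \<Rightarrow> ('i \<Rightarrow> 'x) \<Rightarrow> 'i set set \<Rightarrow> 'a \<Rightarrow> 'i \<Rightarrow> 'a) \<Rightarrow> bool" where
  "left_ultrafunctor k X F \<sigma> \<longleftrightarrow>
    (\<forall>x\<in>topspace X. mcomplete_of (F x) \<and>
        (\<forall>a\<in>mspace (F x). \<forall>b\<in>mspace (F x). mdist (F x) a b \<le> k)) \<and>
    (\<forall>S xs \<mu>. xs ` S \<subseteq> topspace X \<longrightarrow> ultrafilter_on S \<mu> \<longrightarrow>
        (\<forall>a\<in>mspace (F (pt_integral X S xs \<mu>)).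
            uprod_elem S (\<lambda>s. F (xs s)) (\<sigma> S xs \<mu> a)) \<and>
        (\<forall>a\<in>mspace (F (pt_integral X S xs \<mu>)). \<forall>b\<in>mspace (F (pt_integral X S xs \<mu>)).
            uprod_dist S \<mu> (\<lambda>s. F (xs s)) (\<sigma> S xs \<mu> a) (\<sigma> S xs \<mu> b)
              \<le> mdist (F (pt_integral X S xs \<mu>)) a b)) \<and>
    (\<forall>S xs s0. xs ` S \<subseteq> topspace X \<longrightarrow> s0 \<in> S \<longrightarrow>
        (\<forall>a\<in>mspace (F (pt_integral X S xs (principal_uf S s0))).
            \<sigma> S xs (principal_uf S s0) a s0 = a)) \<and>
    (\<forall>S T xs \<nu> \<mu>. xs ` T \<subseteq> topspace X \<longrightarrow> (\<forall>s\<in>S. ultrafilter_on T (\<nu> s)) \<longrightarrow>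
        ultrafilter_on S \<mu> \<longrightarrow>
        (\<forall>a\<in>mspace (F (pt_integral X T xs (uf_integral S \<nu> \<mu>))).
           ulim_real S \<mu> (\<lambda>s. ulim_real T (\<nu> s) (\<lambda>t.
              mdist (F (xs t))
                (\<sigma> T xs (uf_integral S \<nu> \<mu>) a t)
                (\<sigma> T xs (\<nu> s)
                   (\<sigma> S (\<lambda>s'. pt_integral X T xs (\<nu> s')) \<mu> a s) t))) = 0))"

definition total_space :: "'x topology \<Rightarrow> ('x \<Rightarrow> 'a metric) \<Rightarrow> ('x \<times> 'a) set" where
  "total_space X F = Sigma (topspace X) (\<lambda>x. mspace (F x))"

definition is_tau ::
  "'x topology \<Rightarrow> ('x \<Rightarrow> 'a metric) \<Rightarrow>
   ('x set \<Rightarrow> ('x \<Rightarrow> 'x) \<Rightarrow> 'x set set \<Rightarrow> 'a \<Rightarrow> 'x \<Rightarrow> 'a) \<Rightarrow> ('x \<times> 'a) topology \<Rightarrow> bool" where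
  "is_tau X F \<sigma> \<tau> \<longleftrightarrow> topspace \<tau> = total_space X F \<and>
    (\<forall>\<eta> f. ultrafilter_on (total_space X F) \<eta> \<longrightarrow> f \<in> total_space X F \<longrightarrow>
       (uconv \<tau> \<eta> f \<longleftrightarrow>
          uconv X (pushforward (total_space X F) fst (topspace X) \<eta>) (fst f) \<and>
          (\<forall>\<epsilon>>0. Sigma (topspace X)
                    (\<lambda>x. mball_of (F x)
                          (\<sigma> (topspace X) id (pushforward (total_space X F) fst (topspace X) \<eta>)
                              (snd f) x) \<epsilon>) \<in> \<eta>)))"

end

theory Submission
  imports Defs
begin


lemma uf_sub: "ultrafilter_on S \<mu> \<Longrightarrow> A \<in> \<mu> \<Longrightarrow> A \<subseteq> S"
  by (simp add: ultrafilter_on_def subset_eq)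
lemma uf_S: "ultrafilter_on S \<mu> \<Longrightarrow> S \<in> \<mu>"
  by (simp add: ultrafilter_on_def)
lemma uf_empty: "ultrafilter_on S \<mu> \<Longrightarrow> {} \<notin> \<mu>"
  by (simp add: ultrafilter_on_def)
lemma uf_int: "ultrafilter_on S \<mu> \<Longrightarrow> A \<in> \<mu> \<Longrightarrow> B \<in> \<mu> \<Longrightarrow> A \<inter> B \<in> \<mu>"
  by (simp add: ultrafilter_on_def)
lemma uf_mono: "ultrafilter_on S \<mu> \<Longrightarrow> A \<in> \<mu> \<Longrightarrow> A \<subseteq> B \<Longrightarrow> B \<subseteq> S \<Longrightarrow> B \<in> \<mu>"
  by (simp add: ultrafilter_on_def)
lemma uf_compl: assumes "ultrafilter_on S \<mu>" "A \<subseteq> S" "A \<notin> \<mu>" shows "S - A \<in> \<mu>"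
proof -
  have "\<forall>A. A \<subseteq> S \<longrightarrow> A \<in> \<mu> \<or> S - A \<in> \<mu>" using assms(1) by (simp add: ultrafilter_on_def)
  then show ?thesis using assms(2,3) by blast
qed
lemma uf_disj: "ultrafilter_on S \<mu> \<Longrightarrow> A \<in> \<mu> \<Longrightarrow> B \<in> \<mu> \<Longrightarrow> A \<inter> B \<noteq> {}"
  using uf_empty uf_int by fastforce

lemma uf_eq: assumes "ultrafilter_on S \<mu>1" "ultrafilter_on S \<mu>2" "\<mu>1 \<subseteq> \<mu>2"
  shows "\<mu>1 = \<mu>2"
proof
  show "\<mu>2 \<subseteq> \<mu>1"
  proof
    fix A assume A: "A \<in> \<mu>2"
    show "A \<in> \<mu>1"
    proof (rule ccontr)
      assume "A \<notin> \<mu>1"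
      then have "S - A \<in> \<mu>2" using uf_compl[OF assms(1)] uf_sub[OF assms(2) A] assms(3) by blast
      then show False using uf_disj[OF assms(2) A] by blast
    qed
  qed
qed (fact assms(3))

definition pfilter :: "'s set \<Rightarrow> 's set set \<Rightarrow> bool" where
  "pfilter S F \<longleftrightarrow> F \<subseteq> Pow S \<and> S \<in> F \<and> {} \<notin> F \<and>
     (\<forall>A B. A \<in> F \<longrightarrow> B \<in> F \<longrightarrow> A \<inter> B \<in> F) \<and>
     (\<forall>A B. A \<in> F \<longrightarrow> A \<subseteq> B \<longrightarrow> B \<subseteq> S \<longrightarrow> B \<in> F)"

lemma pfilter_int: "pfilter S F \<Longrightarrow> A \<in> F \<Longrightarrow> B \<in> F \<Longrightarrow> A \<inter> B \<in> F"
  by (simp add: pfilter_def)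
lemma pfilter_mono: "pfilter S F \<Longrightarrow> A \<in> F \<Longrightarrow> A \<subseteq> B \<Longrightarrow> B \<subseteq> S \<Longrightarrow> B \<in> F"
  by (simp add: pfilter_def)
lemma pfilter_sub: "pfilter S F \<Longrightarrow> A \<in> F \<Longrightarrow> A \<subseteq> S"
  by (simp add: pfilter_def subset_eq)
lemma pfilter_S: "pfilter S F \<Longrightarrow> S \<in> F"
  by (simp add: pfilter_def)
lemma pfilter_empty: "pfilter S F \<Longrightarrow> {} \<notin> F"
  by (simp add: pfilter_def)
lemma pfilterI:
  assumes "\<And>A. A \<in> F \<Longrightarrow> A \<subseteq> S" "S \<in> F" "{} \<notin> F"
    "\<And>A B. A \<in> F \<Longrightarrow> B \<in> F \<Longrightarrow> A \<inter> B \<in> F"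
    "\<And>A B. A \<in> F \<Longrightarrow> A \<subseteq> B \<Longrightarrow> B \<subseteq> S \<Longrightarrow> B \<in> F"
  shows "pfilter S F"
  unfolding pfilter_def using assms by blast

lemma ufI:
  assumes "pfilter S F" "\<And>A. A \<subseteq> S \<Longrightarrow> A \<in> F \<or> S - A \<in> F"
  shows "ultrafilter_on S F"
  using assms unfolding pfilter_def ultrafilter_on_def by blast

lemma pfilter_ultra:
  assumes "pfilter S F"
  shows "\<exists>U. ultrafilter_on S U \<and> F \<subseteq> U"
proof -
  define \<A> where "\<A> = {G. pfilter S G \<and> F \<subseteq> G}"
  have "\<exists>M\<in>\<A>. \<forall>X\<in>\<A>. M \<subseteq> X \<longrightarrow> X = M"
  proof (rule subset_Zorn_nonempty)
    show "\<A> \<noteq> {}" using assms by (auto simp: \<A>_def)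
  next
    fix \<C> assume ne: "\<C> \<noteq> {}" and ch: "subset.chain \<A> \<C>"
    have ch1: "\<And>G. G \<in> \<C> \<Longrightarrow> pfilter S G \<and> F \<subseteq> G"
      using ch by (auto simp: subset_chain_def \<A>_def)
    have ch2: "\<forall>X\<in>\<C>. \<forall>Y\<in>\<C>. X \<subseteq> Y \<or> Y \<subseteq> X"
      using ch by (auto simp: subset_chain_def)
    obtain G0 where G0: "G0 \<in> \<C>" using ne by blast
    have "pfilter S (\<Union>\<C>)"
    proof (rule pfilterI)
      show "A \<subseteq> S" if "A \<in> \<Union>\<C>" for A
        using that ch1 pfilter_sub by blast
      show "S \<in> \<Union>\<C>" using ch1[OF G0] pfilter_S G0 by blast
      show "{} \<notin> \<Union>\<C>" using ch1 pfilter_empty by blast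
    next
      fix A B assume "A \<in> \<Union>\<C>" "B \<in> \<Union>\<C>"
      then obtain G1 G2 where g: "G1 \<in> \<C>" "G2 \<in> \<C>" "A \<in> G1" "B \<in> G2" by blast
      then have "G1 \<subseteq> G2 \<or> G2 \<subseteq> G1" using ch2 by blast
      then show "A \<inter> B \<in> \<Union>\<C>"
      proof
        assume "G1 \<subseteq> G2"
        then have "A \<inter> B \<in> G2" using g ch1[OF g(2)] pfilter_int[of S G2 A B] by blast
        then show ?thesis using g by blast
      next
        assume "G2 \<subseteq> G1"
        then have "A \<inter> B \<in> G1" using g ch1[OF g(1)] pfilter_int[of S G1 A B] by blast
        then show ?thesis using g by blast
      qed
    next
      fix A B assume "A \<in> \<Union>\<C>" "A \<subseteq> B" "B \<subseteq> S"
      then obtain G where G: "G \<in> \<C>" "A \<in> G" "A \<subseteq> B" "B \<subseteq> S" by blast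
      then have "B \<in> G" using ch1[OF G(1)] pfilter_mono by blast
      then show "B \<in> \<Union>\<C>" using G by blast
    qed
    moreover have "F \<subseteq> \<Union>\<C>" using ch1[OF G0] G0 by blast
    ultimately show "\<Union>\<C> \<in> \<A>" by (simp add: \<A>_def)
  qed
  then obtain M where M: "pfilter S M" "F \<subseteq> M" and max: "\<And>X. pfilter S X \<Longrightarrow> F \<subseteq> X \<Longrightarrow> M \<subseteq> X \<Longrightarrow> X = M"
    by (auto simp: \<A>_def)
  have "ultrafilter_on S M"
  proof (rule ufI[OF M(1)])
    fix A assume AS: "A \<subseteq> S"
    show "A \<in> M \<or> S - A \<in> M"
    proof (cases "\<exists>m\<in>M. m \<inter> A = {}")
      case True
      then obtain m where m: "m \<in> M" "m \<inter> A = {}" by blast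
      then have "m \<subseteq> S - A" using pfilter_sub[OF M(1) m(1)] by blast
      then have "S - A \<in> M" using pfilter_mono[OF M(1) m(1)] by blast
      then show ?thesis by blast
    next
      case False
      define G where "G = {B. B \<subseteq> S \<and> (\<exists>m\<in>M. m \<inter> A \<subseteq> B)}"
      have "pfilter S G"
      proof (rule pfilterI)
        show "B \<subseteq> S" if "B \<in> G" for B using that by (simp add: G_def)
        show "S \<in> G" using pfilter_S[OF M(1)] by (auto simp: G_def)
        show "{} \<notin> G" using False by (auto simp: G_def)
      next
        fix B1 B2 assume "B1 \<in> G" "B2 \<in> G"
        then obtain m1 m2 where mm: "m1 \<in> M" "m2 \<in> M" "m1 \<inter> A \<subseteq> B1" "m2 \<inter> A \<subseteq> B2" "B1 \<subseteq> S" "B2 \<subseteq> S"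
          by (auto simp: G_def)
        have "m1 \<inter> m2 \<in> M" using pfilter_int[OF M(1) mm(1,2)] .
        moreover have "(m1 \<inter> m2) \<inter> A \<subseteq> B1 \<inter> B2" using mm by blast
        ultimately show "B1 \<inter> B2 \<in> G" unfolding G_def using mm by blast
      next
        fix B1 B2 assume "B1 \<in> G" "B1 \<subseteq> B2" "B2 \<subseteq> S"
        then show "B2 \<in> G" unfolding G_def by blast
      qed
      moreover have "M \<subseteq> G"
      proof
        fix m assume "m \<in> M"
        then show "m \<in> G" using pfilter_sub[OF M(1)] unfolding G_def by blast
      qed
      ultimately have "G = M" using max M(2) by blast
      moreover have "A \<in> G" using AS pfilter_S[OF M(1)] unfolding G_def by blast
      ultimately show ?thesis by blast
    qed
  qed
  then show ?thesis using M(2) by blast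
qed

lemma uf_base:
  assumes "B \<noteq> {}" "\<And>b. b \<in> B \<Longrightarrow> b \<noteq> {} \<and> b \<subseteq> S"
    "\<And>b1 b2. b1 \<in> B \<Longrightarrow> b2 \<in> B \<Longrightarrow> \<exists>b3\<in>B. b3 \<subseteq> b1 \<inter> b2"
  shows "\<exists>U. ultrafilter_on S U \<and> B \<subseteq> U"
proof -
  define F where "F = {A. A \<subseteq> S \<and> (\<exists>b\<in>B. b \<subseteq> A)}"
  obtain b0 where b0: "b0 \<in> B" using assms(1) by blast
  have "pfilter S F"
  proof (rule pfilterI)
    show "A \<subseteq> S" if "A \<in> F" for A using that by (simp add: F_def)
    show "S \<in> F" using b0 assms(2)[OF b0] unfolding F_def by blast
    show "{} \<notin> F" using assms(2) unfolding F_def by blast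
  next
    fix A1 A2 assume "A1 \<in> F" "A2 \<in> F"
    then obtain b1 b2 where bb: "b1 \<in> B" "b2 \<in> B" "b1 \<subseteq> A1" "b2 \<subseteq> A2" "A1 \<subseteq> S" "A2 \<subseteq> S"
      unfolding F_def by blast
    obtain b3 where "b3 \<in> B" "b3 \<subseteq> b1 \<inter> b2" using assms(3)[OF bb(1,2)] by blast
    then show "A1 \<inter> A2 \<in> F" unfolding F_def using bb by blast
  next
    fix A1 A2 assume "A1 \<in> F" "A1 \<subseteq> A2" "A2 \<subseteq> S"
    then show "A2 \<in> F" unfolding F_def by blast
  qed
  then obtain U where "ultrafilter_on S U" "F \<subseteq> U" using pfilter_ultra by blast
  moreover have "B \<subseteq> F" using assms(2) unfolding F_def by blast
  ultimately show ?thesis by blast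
qed

lemma openin_uf:
  assumes "C \<subseteq> topspace T"
    "\<And>f \<eta>. f \<in> C \<Longrightarrow> ultrafilter_on (topspace T) \<eta> \<Longrightarrow> uconv T \<eta> f \<Longrightarrow> C \<in> \<eta>"
  shows "openin T C"
proof (rule ccontr)
  assume "\<not> openin T C"
  then obtain f where f: "f \<in> C" and no: "\<And>U. openin T U \<Longrightarrow> f \<in> U \<Longrightarrow> \<not> U \<subseteq> C"
    using openin_subopen[of T C] by blast
  define B where "B = (\<lambda>U. U - C) ` {U. openin T U \<and> f \<in> U}"
  have "\<exists>\<eta>. ultrafilter_on (topspace T) \<eta> \<and> B \<subseteq> \<eta>"
  proof (rule uf_base)
    have "topspace T - C \<in> B" unfolding B_def using f assms(1) openin_topspace[of T] by (intro imageI) blast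
    then show "B \<noteq> {}" by blast
    show "b \<noteq> {} \<and> b \<subseteq> topspace T" if hb: "b \<in> B" for b
    proof -
      obtain U where U: "b = U - C" "openin T U" "f \<in> U" using hb unfolding B_def by (elim imageE) simp
      have "b \<noteq> {}" using no[OF U(2,3)] U(1) by auto
      moreover have "b \<subseteq> topspace T" using U(1) openin_subset[OF U(2)] by auto
      ultimately show ?thesis by blast
    qed
    show "\<exists>b3\<in>B. b3 \<subseteq> b1 \<inter> b2" if hb: "b1 \<in> B" "b2 \<in> B" for b1 b2
    proof -
      obtain U1 where U1: "b1 = U1 - C" "openin T U1" "f \<in> U1"
        using hb(1) unfolding B_def by (elim imageE) simp
      obtain U2 where U2: "b2 = U2 - C" "openin T U2" "f \<in> U2"
        using hb(2) unfolding B_def by (elim imageE) simp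
      have "openin T (U1 \<inter> U2)" using U1(2) U2(2) by (rule openin_Int)
      then have "(U1 \<inter> U2) - C \<in> B" unfolding B_def using U1(3) U2(3) by (intro imageI) simp
      moreover have "(U1 \<inter> U2) - C \<subseteq> b1 \<inter> b2" using U1(1) U2(1) by auto
      ultimately show ?thesis by blast
    qed
  qed
  then obtain \<eta> where \<eta>: "ultrafilter_on (topspace T) \<eta>" "B \<subseteq> \<eta>" by blast
  have "uconv T \<eta> f"
    unfolding uconv_def
  proof (intro conjI allI impI)
    show "f \<in> topspace T" using f assms(1) by blast
    fix U assume "openin T U" "f \<in> U"
    then have "U - C \<in> B" unfolding B_def by (intro imageI) simp
    then have "U - C \<in> \<eta>" using \<eta>(2) by blast
    then show "U \<in> \<eta>" using uf_mono[OF \<eta>(1)] openin_subset[OF \<open>openin T U\<close>] by blast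
  qed
  then have "C \<in> \<eta>" using assms(2) f \<eta>(1) by blast
  moreover have "topspace T - C \<in> \<eta>"
  proof -
    have "topspace T - C \<in> B" unfolding B_def using f assms(1) openin_topspace[of T] by (intro imageI) blast
    then show ?thesis using \<eta>(2) by blast
  qed
  ultimately show False using uf_disj[OF \<eta>(1)] by blast
qed

lemma pf_mem: "B \<in> pushforward S g T \<mu> \<longleftrightarrow> B \<subseteq> T \<and> {s\<in>S. g s \<in> B} \<in> \<mu>"
  by (simp add: pushforward_def)

lemma pushforward_uf:
  assumes "ultrafilter_on S \<mu>" "g ` S \<subseteq> T"
  shows "ultrafilter_on T (pushforward S g T \<mu>)"
proof -
  let ?P = "pushforward S g T \<mu>"
  have h1: "?P \<subseteq> Pow T" by (auto simp: pf_mem)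
  have "{s\<in>S. g s \<in> T} = S" using assms(2) by blast
  then have h2: "T \<in> ?P" using uf_S[OF assms(1)] by (simp add: pf_mem)
  have h3: "{} \<notin> ?P" using uf_empty[OF assms(1)] by (simp add: pf_mem)
  have h4: "A \<inter> B \<in> ?P" if "A \<in> ?P" "B \<in> ?P" for A B
  proof -
    have "{s\<in>S. g s \<in> A \<inter> B} = {s\<in>S. g s \<in> A} \<inter> {s\<in>S. g s \<in> B}" by blast
    then show ?thesis using that uf_int[OF assms(1)] by (auto simp: pf_mem)
  qed
  have h5: "B \<in> ?P" if "A \<in> ?P" "A \<subseteq> B" "B \<subseteq> T" for A B
  proof -
    have "{s\<in>S. g s \<in> A} \<subseteq> {s\<in>S. g s \<in> B}" using that(2) by blast
    then show ?thesis using that uf_mono[OF assms(1), of "{s\<in>S. g s \<in> A}" "{s\<in>S. g s \<in> B}"]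
      by (auto simp: pf_mem)
  qed
  have h6: "A \<in> ?P \<or> T - A \<in> ?P" if "A \<subseteq> T" for A
  proof -
    have e: "{s \<in> S. g s \<in> T - A} = S - {s \<in> S. g s \<in> A}" using assms(2) by auto
    have sub: "{s \<in> S. g s \<in> A} \<subseteq> S" by blast
    have "{s \<in> S. g s \<in> A} \<in> \<mu> \<or> S - {s \<in> S. g s \<in> A} \<in> \<mu>"
      using uf_compl[OF assms(1) sub] by blast
    then show ?thesis using that e by (auto simp: pf_mem)
  qed
  show ?thesis unfolding ultrafilter_on_def using h1 h2 h3 h4 h5 h6 by blast
qed

lemma pushforward_id:
  assumes "ultrafilter_on S \<mu>" shows "pushforward S id S \<mu> = \<mu>"
proof (rule set_eqI)
  fix B
  show "B \<in> pushforward S id S \<mu> \<longleftrightarrow> B \<in> \<mu>"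
  proof (cases "B \<subseteq> S")
    case True
    then have "{s\<in>S. id s \<in> B} = B" by auto
    then show ?thesis using True by (simp add: pf_mem)
  next
    case False
    then show ?thesis using uf_sub[OF assms, of B] by (auto simp: pf_mem)
  qed
qed

lemma uconv_unique:
  assumes "Hausdorff_space X" "ultrafilter_on S \<mu>" "uconv X \<mu> x" "uconv X \<mu> y"
  shows "x = y"
proof (rule ccontr)
  assume "x \<noteq> y"
  moreover have "x \<in> topspace X" "y \<in> topspace X" using assms(3,4) by (auto simp: uconv_def)
  ultimately obtain U V where "openin X U" "openin X V" "x \<in> U" "y \<in> V" "disjnt U V"
    using assms(1) unfolding Hausdorff_space_def by metis
  then have "U \<in> \<mu>" "V \<in> \<mu>" using assms(3,4) by (auto simp: uconv_def)
  then show False using uf_disj[OF assms(2)] \<open>disjnt U V\<close> by (auto simp: disjnt_def)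
qed

lemma pt_integral_id:
  assumes "Hausdorff_space X" "ultrafilter_on (topspace X) \<mu>" "uconv X \<mu> x"
  shows "pt_integral X (topspace X) id \<mu> = x"
  unfolding pt_integral_def pushforward_id[OF assms(2)]
  using uconv_unique[OF assms(1,2)] assms(3) by blast

lemma ulim_unique:
  assumes "ultrafilter_on S \<mu>" "\<forall>e>0. {s\<in>S. \<bar>r s - L\<bar> < e} \<in> \<mu>"
  shows "ulim_real S \<mu> r = L"
  unfolding ulim_real_def
proof (rule the_equality)
  fix L' assume h: "\<forall>e>0. {s\<in>S. \<bar>r s - L'\<bar> < e} \<in> \<mu>"
  show "L' = L"
  proof (rule ccontr)
    assume ne: "L' \<noteq> L"
    define e where "e = \<bar>L' - L\<bar> / 2"
    have e: "e > 0" using ne by (simp add: e_def)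
    have "{s\<in>S. \<bar>r s - L'\<bar> < e} \<inter> {s\<in>S. \<bar>r s - L\<bar> < e} \<noteq> {}"
      using uf_disj[OF assms(1)] h assms(2) e by blast
    then obtain s where h: "\<bar>r s - L'\<bar> < e" "\<bar>r s - L\<bar> < e" by blast
    have "\<bar>r s - L'\<bar> + \<bar>r s - L\<bar> < e + e" using add_strict_mono[OF h] .
    then have 1: "\<bar>r s - L'\<bar> + \<bar>r s - L\<bar> < \<bar>L' - L\<bar>" unfolding e_def by simp
    have 2: "\<bar>L' - L\<bar> \<le> \<bar>r s - L'\<bar> + \<bar>r s - L\<bar>" by linarith
    show False using 1 2 by simp
  qed
qed (use assms in auto)

lemma ulim_exists:
  fixes r :: "'s \<Rightarrow> real"
  assumes "ultrafilter_on S \<mu>" "\<And>s. s \<in> S \<Longrightarrow> 0 \<le> r s \<and> r s \<le> k"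
  shows "\<exists>L. \<forall>e>0. {s\<in>S. \<bar>r s - L\<bar> < e} \<in> \<mu>"
proof -
  define A where "A = {t. {s\<in>S. t \<le> r s} \<in> \<mu>}"
  have "{s\<in>S. 0 \<le> r s} = S" using assms(2) by blast
  then have "0 \<in> A" using uf_S[OF assms(1)] unfolding A_def by simp
  have bdd: "t \<le> k" if "t \<in> A" for t
  proof (rule ccontr)
    assume "\<not> t \<le> k"
    have "False" if "s \<in> S" "t \<le> r s" for s using assms(2)[OF that(1)] that(2) \<open>\<not> t \<le> k\<close> by linarith
    then have E: "{s\<in>S. t \<le> r s} = {}" by blast
    have P: "{s\<in>S. t \<le> r s} \<in> \<mu>" using that by (simp add: A_def)
    show False using P[unfolded E] uf_empty[OF assms(1)] by blast
  qed
  define L where "L = Sup A"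
  have bddA: "bdd_above A" using bdd by (auto simp: bdd_above_def)
  show ?thesis
  proof (intro exI allI impI)
    fix e :: real assume e: "e > 0"
    have "L - e < L" using e by simp
    then obtain t where t: "t \<in> A" "L - e < t"
      using less_cSup_iff[OF _ bddA] \<open>0 \<in> A\<close> unfolding L_def by blast
    have P1: "{s\<in>S. t \<le> r s} \<in> \<mu>" using t by (auto simp: A_def)
    have P2: "{s\<in>S. r s < L + e} \<in> \<mu>"
    proof (rule ccontr)
      assume nP: "{s\<in>S. r s < L + e} \<notin> \<mu>"
      have sub: "{s\<in>S. r s < L + e} \<subseteq> S" by blast
      have c: "S - {s\<in>S. r s < L + e} \<in> \<mu>" using uf_compl[OF assms(1) sub nP] .
      have eq: "S - {s\<in>S. r s < L + e} = {s\<in>S. L + e \<le> r s}" by (auto simp: not_less)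
      have "L + e \<in> A" using c unfolding eq A_def by simp
      then have "L + e \<le> L" using cSup_upper[OF _ bddA] unfolding L_def by blast
      then show False using e by simp
    qed
    have "{s\<in>S. t \<le> r s} \<inter> {s\<in>S. r s < L + e} \<subseteq> {s\<in>S. \<bar>r s - L\<bar> < e}"
      using t by auto
    then show "{s\<in>S. \<bar>r s - L\<bar> < e} \<in> \<mu>"
      using uf_mono[OF assms(1) uf_int[OF assms(1) P1 P2]] by blast
  qed
qed


lemma LU_parts:
  assumes "left_ultrafunctor k X F \<sigma>"
  shows "\<forall>x\<in>topspace X. \<forall>a\<in>mspace (F x). \<forall>b\<in>mspace (F x). mdist (F x) a b \<le> k"
    and "\<And>\<mu> a. ultrafilter_on (topspace X) \<mu> \<Longrightarrow> a \<in> mspace (F (pt_integral X (topspace X) id \<mu>)) \<Longrightarrow>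
           uprod_elem (topspace X) (\<lambda>s. F (id s)) (\<sigma> (topspace X) id \<mu> a)"
proof -
  have A: "\<forall>x\<in>topspace X. mcomplete_of (F x) \<and>
        (\<forall>a\<in>mspace (F x). \<forall>b\<in>mspace (F x). mdist (F x) a b \<le> k)"
    using assms unfolding left_ultrafunctor_def by (elim conjE) assumption
  then show "\<forall>x\<in>topspace X. \<forall>a\<in>mspace (F x). \<forall>b\<in>mspace (F x). mdist (F x) a b \<le> k"
    by blast
  have B: "\<forall>S xs \<mu>. xs ` S \<subseteq> topspace X \<longrightarrow> ultrafilter_on S \<mu> \<longrightarrow>
        (\<forall>a\<in>mspace (F (pt_integral X S xs \<mu>)).
            uprod_elem S (\<lambda>s. F (xs s)) (\<sigma> S xs \<mu> a)) \<and>
        (\<forall>a\<in>mspace (F (pt_integral X S xs \<mu>)). \<forall>b\<in>mspace (F (pt_integral X S xs \<mu>)).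
            uprod_dist S \<mu> (\<lambda>s. F (xs s)) (\<sigma> S xs \<mu> a) (\<sigma> S xs \<mu> b)
              \<le> mdist (F (pt_integral X S xs \<mu>)) a b)"
    using assms unfolding left_ultrafunctor_def by (elim conjE) assumption
  fix \<mu> a assume "ultrafilter_on (topspace X) \<mu>" "a \<in> mspace (F (pt_integral X (topspace X) id \<mu>))"
  moreover have "id ` topspace X \<subseteq> topspace X" by simp
  ultimately show "uprod_elem (topspace X) (\<lambda>s. F (id s)) (\<sigma> (topspace X) id \<mu> a)"
    using B by blast
qed

lemma sigma_mem:
  assumes "left_ultrafunctor k X F \<sigma>" "Hausdorff_space X"
    "ultrafilter_on (topspace X) \<mu>" "uconv X \<mu> x" "g \<in> mspace (F x)"
  shows "uprod_elem (topspace X) F (\<sigma> (topspace X) id \<mu> g)"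
proof -
  have "pt_integral X (topspace X) id \<mu> = x" using pt_integral_id[OF assms(2,3,4)] .
  then have "uprod_elem (topspace X) (\<lambda>s. F (id s)) (\<sigma> (topspace X) id \<mu> g)"
    using LU_parts(2)[OF assms(1) assms(3)] assms(5) by simp
  then show ?thesis by (simp add: uprod_elem_def)
qed

theorem theorem3p2:
  fixes X :: "'x topology" and F :: "'x \<Rightarrow> 'a metric" and k :: real
    and \<sigma> :: "'x set \<Rightarrow> ('x \<Rightarrow> 'x) \<Rightarrow> 'x set set \<Rightarrow> 'a \<Rightarrow> 'x \<Rightarrow> 'a"
    and \<tau> :: "('x \<times> 'a) topology" and C :: "('x \<times> 'a) set"
  assumes "compact_space X" and "Hausdorff_space X"
    and "left_ultrafunctor k X F \<sigma>"
    and "is_tau X F \<sigma> \<tau>"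
    and "C \<subseteq> total_space X F"
  shows "openin \<tau> C \<longleftrightarrow>
    (\<forall>\<mu> x g b. ultrafilter_on (topspace X) \<mu> \<longrightarrow> uconv X \<mu> x \<longrightarrow> x \<in> fst ` C \<longrightarrow>
       g \<in> {a. (x, a) \<in> C} \<longrightarrow>
       is_rep (topspace X) \<mu> F (\<sigma> (topspace X) id \<mu> g) b \<longrightarrow>
       (\<exists>W\<in>\<mu>. \<exists>\<epsilon>>0. \<forall>y\<in>W. mball_of (F y) (b y) \<epsilon> \<subseteq> {a. (y, a) \<in> C}))"
proof -
  define E where "E = total_space X F"
  have tauE: "topspace \<tau> = E" using assms(4) unfolding is_tau_def E_def by (elim conjE) assumption
  have tauC0: "\<forall>\<eta> f. ultrafilter_on (total_space X F) \<eta> \<longrightarrow> f \<in> total_space X F \<longrightarrow>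
       (uconv \<tau> \<eta> f \<longleftrightarrow>
          uconv X (pushforward (total_space X F) fst (topspace X) \<eta>) (fst f) \<and>
          (\<forall>\<epsilon>>0. Sigma (topspace X)
                    (\<lambda>x. mball_of (F x)
                          (\<sigma> (topspace X) id (pushforward (total_space X F) fst (topspace X) \<eta>)
                              (snd f) x) \<epsilon>) \<in> \<eta>))"
    using assms(4) unfolding is_tau_def by (elim conjE) assumption
  have tauC: "uconv \<tau> \<eta> f \<longleftrightarrow>
          uconv X (pushforward E fst (topspace X) \<eta>) (fst f) \<and>
          (\<forall>\<epsilon>>0. Sigma (topspace X)
                    (\<lambda>x. mball_of (F x)
                          (\<sigma> (topspace X) id (pushforward E fst (topspace X) \<eta>)
                              (snd f) x) \<epsilon>) \<in> \<eta>)"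
    if "ultrafilter_on E \<eta>" "f \<in> E" for \<eta> f
    using tauC0 that unfolding E_def by blast
  have bnd: "\<forall>x\<in>topspace X. \<forall>a\<in>mspace (F x). \<forall>b\<in>mspace (F x). mdist (F x) a b \<le> k"
    using LU_parts(1)[OF assms(3)] .
  have CE: "C \<subseteq> E" using assms(5) unfolding E_def .
  have fstE: "fst ` E \<subseteq> topspace X" unfolding E_def total_space_def by auto
  have memE: "(y, a) \<in> E \<longleftrightarrow> y \<in> topspace X \<and> a \<in> mspace (F y)" for y a
    unfolding E_def total_space_def by simp
  show ?thesis
  proof
    assume op: "openin \<tau> C"
    show "\<forall>\<mu> x g b. ultrafilter_on (topspace X) \<mu> \<longrightarrow> uconv X \<mu> x \<longrightarrow> x \<in> fst ` C \<longrightarrow>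
       g \<in> {a. (x, a) \<in> C} \<longrightarrow>
       is_rep (topspace X) \<mu> F (\<sigma> (topspace X) id \<mu> g) b \<longrightarrow>
       (\<exists>W\<in>\<mu>. \<exists>\<epsilon>>0. \<forall>y\<in>W. mball_of (F y) (b y) \<epsilon> \<subseteq> {a. (y, a) \<in> C})"
    proof (intro allI impI)
      fix \<mu> x g b
      assume \<mu>: "ultrafilter_on (topspace X) \<mu>" and conv: "uconv X \<mu> x" and xC: "x \<in> fst ` C"
        and gC: "g \<in> {a. (x, a) \<in> C}" and rep: "is_rep (topspace X) \<mu> F (\<sigma> (topspace X) id \<mu> g) b"
      show "\<exists>W\<in>\<mu>. \<exists>\<epsilon>>0. \<forall>y\<in>W. mball_of (F y) (b y) \<epsilon> \<subseteq> {a. (y, a) \<in> C}"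
      proof (rule ccontr)
        assume neg: "\<not> (\<exists>W\<in>\<mu>. \<exists>\<epsilon>>0. \<forall>y\<in>W. mball_of (F y) (b y) \<epsilon> \<subseteq> {a. (y, a) \<in> C})"
        have xgC: "(x, g) \<in> C" using gC by simp
        then have xgE: "(x, g) \<in> E" using CE by blast
        then have gM: "g \<in> mspace (F x)" and xX: "x \<in> topspace X" using memE by auto
        define sg where "sg = \<sigma> (topspace X) id \<mu> g"
        have sgM: "\<And>y. y \<in> topspace X \<Longrightarrow> sg y \<in> mspace (F y)"
          using sigma_mem[OF assms(3,2) \<mu> conv gM] unfolding sg_def uprod_elem_def by blast
        have bM: "\<And>y. y \<in> topspace X \<Longrightarrow> b y \<in> mspace (F y)"
          using rep unfolding is_rep_def uprod_elem_def by blast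
        have d0: "ulim_real (topspace X) \<mu> (\<lambda>s. mdist (F s) (b s) (sg s)) = 0"
          using rep unfolding is_rep_def uprod_dist_def sg_def by blast
        obtain L where L: "\<forall>e>0. {s\<in>topspace X. \<bar>mdist (F s) (b s) (sg s) - L\<bar> < e} \<in> \<mu>"
        proof -
          have bd: "0 \<le> mdist (F s) (b s) (sg s) \<and> mdist (F s) (b s) (sg s) \<le> k" if "s \<in> topspace X" for s
            using bnd that bM[OF that] sgM[OF that] by simp
          show ?thesis using ulim_exists[OF \<mu>, of "\<lambda>s. mdist (F s) (b s) (sg s)" k, OF bd] that by blast
        qed
        have "L = 0" using ulim_unique[OF \<mu> L] d0 by simp
        then have close: "\<And>e. e > 0 \<Longrightarrow> {s\<in>topspace X. mdist (F s) (b s) (sg s) < e} \<in> \<mu>"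
          using L by simp
        define Bs where "Bs W \<epsilon> = Sigma W (\<lambda>y. mball_of (F y) (b y) \<epsilon>) - C" for W \<epsilon>
        define B where "B = (\<lambda>p. Bs (fst p) (snd p)) ` ({W. W \<in> \<mu>} \<times> {\<epsilon>. \<epsilon> > (0::real)})"
        have BsB: "Bs W \<epsilon> \<in> B" if "W \<in> \<mu>" "\<epsilon> > 0" for W \<epsilon>
          unfolding B_def by (rule image_eqI[of _ _ "(W, \<epsilon>)"]) (use that in simp_all)
        have BsE: "Bs W \<epsilon> \<subseteq> E" if "W \<in> \<mu>" for W \<epsilon>
        proof
          fix p assume "p \<in> Bs W \<epsilon>"
          then obtain y a where p: "p = (y, a)" "y \<in> W" "a \<in> mball_of (F y) (b y) \<epsilon>"
            unfolding Bs_def by blast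
          then show "p \<in> E" using uf_sub[OF \<mu> that] memE by auto
        qed
        have Bsne: "Bs W \<epsilon> \<noteq> {}" if "W \<in> \<mu>" "\<epsilon> > 0" for W \<epsilon>
        proof -
          have "\<not> (\<forall>y\<in>W. mball_of (F y) (b y) \<epsilon> \<subseteq> {a. (y, a) \<in> C})" using neg that by blast
          then obtain y a where "y \<in> W" "a \<in> mball_of (F y) (b y) \<epsilon>" "(y, a) \<notin> C" by blast
          then have "(y, a) \<in> Bs W \<epsilon>" unfolding Bs_def by blast
          then show ?thesis by blast
        qed
        have "\<exists>\<eta>. ultrafilter_on E \<eta> \<and> B \<subseteq> \<eta>"
        proof (rule uf_base)
          have "Bs (topspace X) 1 \<in> B" by (rule BsB[OF uf_S[OF \<mu>]]) simp
          then show "B \<noteq> {}" by blast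
          show "c \<noteq> {} \<and> c \<subseteq> E" if hc: "c \<in> B" for c
          proof -
            obtain W \<epsilon> where "c = Bs W \<epsilon>" "W \<in> \<mu>" "\<epsilon> > 0"
              using hc unfolding B_def by (elim imageE) auto
            then show ?thesis using Bsne BsE by blast
          qed
          show "\<exists>c3\<in>B. c3 \<subseteq> c1 \<inter> c2" if hc: "c1 \<in> B" "c2 \<in> B" for c1 c2
          proof -
            obtain W1 \<epsilon>1 where 1: "c1 = Bs W1 \<epsilon>1" "W1 \<in> \<mu>" "\<epsilon>1 > 0"
              using hc(1) unfolding B_def by (elim imageE) auto
            obtain W2 \<epsilon>2 where 2: "c2 = Bs W2 \<epsilon>2" "W2 \<in> \<mu>" "\<epsilon>2 > 0"
              using hc(2) unfolding B_def by (elim imageE) auto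
            have "Bs (W1 \<inter> W2) (min \<epsilon>1 \<epsilon>2) \<in> B"
              using BsB uf_int[OF \<mu> 1(2) 2(2)] 1(3) 2(3) by simp
            moreover have "Bs (W1 \<inter> W2) (min \<epsilon>1 \<epsilon>2) \<subseteq> c1 \<inter> c2"
              unfolding 1(1) 2(1) Bs_def by auto
            ultimately show ?thesis by blast
          qed
        qed
        then obtain \<eta> where \<eta>: "ultrafilter_on E \<eta>" "B \<subseteq> \<eta>" by blast
        have Bs\<eta>: "Bs W \<epsilon> \<in> \<eta>" if "W \<in> \<mu>" "\<epsilon> > 0" for W \<epsilon> using BsB[OF that] \<eta>(2) by blast
        define \<pi> where "\<pi> = pushforward E fst (topspace X) \<eta>"
        have \<pi>uf: "ultrafilter_on (topspace X) \<pi>" unfolding \<pi>_def using pushforward_uf[OF \<eta>(1) fstE] .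
        have "\<mu> \<subseteq> \<pi>"
        proof
          fix W assume W: "W \<in> \<mu>"
          have "Bs W 1 \<subseteq> {s\<in>E. fst s \<in> W}" using BsE[OF W, of 1] unfolding Bs_def by auto
          then have "{s\<in>E. fst s \<in> W} \<in> \<eta>" using uf_mono[OF \<eta>(1) Bs\<eta>[OF W, of 1]] by auto
          then show "W \<in> \<pi>" unfolding \<pi>_def pf_mem using uf_sub[OF \<mu> W] by simp
        qed
        then have \<pi>\<mu>: "\<pi> = \<mu>" using uf_eq[OF \<mu> \<pi>uf] by simp
        have balls: "Sigma (topspace X) (\<lambda>y. mball_of (F y) (sg y) \<epsilon>) \<in> \<eta>" if e: "\<epsilon> > 0" for \<epsilon>
        proof -
          define W where "W = {s\<in>topspace X. mdist (F s) (b s) (sg s) < \<epsilon>/2}"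
          have W: "W \<in> \<mu>" unfolding W_def by (rule close) (use e in simp)
          have "Bs W (\<epsilon>/2) \<subseteq> Sigma (topspace X) (\<lambda>y. mball_of (F y) (sg y) \<epsilon>)"
          proof
            fix p assume "p \<in> Bs W (\<epsilon>/2)"
            then obtain y a where p: "p = (y, a)" "y \<in> W" "a \<in> mball_of (F y) (b y) (\<epsilon>/2)"
              unfolding Bs_def by blast
            have y: "y \<in> topspace X" using p(2) unfolding W_def by blast
            have aM: "a \<in> mspace (F y)" and da: "mdist (F y) (b y) a < \<epsilon>/2" using p(3) by auto
            have db: "mdist (F y) (b y) (sg y) < \<epsilon>/2" using p(2) unfolding W_def by blast
            have "mdist (F y) (sg y) a \<le> mdist (F y) (sg y) (b y) + mdist (F y) (b y) a"
              using mdist_triangle[OF sgM[OF y] bM[OF y] aM] .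
            moreover have "mdist (F y) (sg y) (b y) = mdist (F y) (b y) (sg y)" by (rule mdist_commute)
            ultimately have "mdist (F y) (sg y) a < \<epsilon>" using da db by linarith
            then show "p \<in> Sigma (topspace X) (\<lambda>y. mball_of (F y) (sg y) \<epsilon>)"
              using p(1) y aM sgM[OF y] by simp
          qed
          moreover have "Sigma (topspace X) (\<lambda>y. mball_of (F y) (sg y) \<epsilon>) \<subseteq> E"
            using memE by auto
          moreover have "Bs W (\<epsilon>/2) \<in> \<eta>" using Bs\<eta>[OF W] e by simp
          ultimately show ?thesis using uf_mono[OF \<eta>(1)] by blast
        qed
        have "uconv \<tau> \<eta> (x, g)"
          using tauC[OF \<eta>(1) xgE] conv balls unfolding \<pi>_def[symmetric] \<pi>\<mu> sg_def by simp
        then have "C \<in> \<eta>" using op xgC unfolding uconv_def by blast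
        moreover have "Bs (topspace X) 1 \<in> \<eta>" using Bs\<eta>[OF uf_S[OF \<mu>]] by simp
        moreover have "C \<inter> Bs (topspace X) 1 = {}" unfolding Bs_def by blast
        ultimately show False using uf_disj[OF \<eta>(1)] by blast
      qed
    qed
  next
    assume H: "\<forall>\<mu> x g b. ultrafilter_on (topspace X) \<mu> \<longrightarrow> uconv X \<mu> x \<longrightarrow> x \<in> fst ` C \<longrightarrow>
       g \<in> {a. (x, a) \<in> C} \<longrightarrow>
       is_rep (topspace X) \<mu> F (\<sigma> (topspace X) id \<mu> g) b \<longrightarrow>
       (\<exists>W\<in>\<mu>. \<exists>\<epsilon>>0. \<forall>y\<in>W. mball_of (F y) (b y) \<epsilon> \<subseteq> {a. (y, a) \<in> C})"
    show "openin \<tau> C"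
    proof (rule openin_uf)
      show "C \<subseteq> topspace \<tau>" using CE tauE by simp
    next
      fix f \<eta> assume fC: "f \<in> C" and \<eta>0: "ultrafilter_on (topspace \<tau>) \<eta>" and cv: "uconv \<tau> \<eta> f"
      have \<eta>: "ultrafilter_on E \<eta>" using \<eta>0 tauE by simp
      obtain x g where f: "f = (x, g)" by (cases f)
      have xgC: "(x, g) \<in> C" using fC f by simp
      then have xgE: "(x, g) \<in> E" using CE by blast
      then have gM: "g \<in> mspace (F x)" and xX: "x \<in> topspace X" using memE by auto
      define \<mu> where "\<mu> = pushforward E fst (topspace X) \<eta>"
      have \<mu>uf: "ultrafilter_on (topspace X) \<mu>" unfolding \<mu>_def using pushforward_uf[OF \<eta> fstE] .
      define sg where "sg = \<sigma> (topspace X) id \<mu> g"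
      have tc: "uconv X \<mu> x \<and> (\<forall>\<epsilon>>0. Sigma (topspace X) (\<lambda>y. mball_of (F y) (sg y) \<epsilon>) \<in> \<eta>)"
        using tauC[OF \<eta> xgE] cv unfolding f \<mu>_def[symmetric] sg_def by simp
      then have conv: "uconv X \<mu> x" by blast
      have sgE: "uprod_elem (topspace X) F sg"
        using sigma_mem[OF assms(3,2) \<mu>uf conv gM] unfolding sg_def .
      then have sgM: "\<And>y. y \<in> topspace X \<Longrightarrow> sg y \<in> mspace (F y)" unfolding uprod_elem_def by blast
      have "{s\<in>topspace X. \<bar>mdist (F s) (sg s) (sg s) - 0\<bar> < e} = topspace X" if "e > 0" for e
        using sgM that by (auto simp: Metric_space.mdist_zero[OF Metric_space_mspace_mdist])
      then have "\<forall>e>0. {s\<in>topspace X. \<bar>mdist (F s) (sg s) (sg s) - 0\<bar> < e} \<in> \<mu>"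
        using uf_S[OF \<mu>uf] by simp
      then have "ulim_real (topspace X) \<mu> (\<lambda>s. mdist (F s) (sg s) (sg s)) = 0"
        by (rule ulim_unique[OF \<mu>uf])
      then have rep: "is_rep (topspace X) \<mu> F (\<sigma> (topspace X) id \<mu> g) sg"
        using sgE unfolding is_rep_def uprod_dist_def sg_def by simp
      have "x \<in> fst ` C" using xgC by force
      then obtain W \<epsilon> where W: "W \<in> \<mu>" "\<epsilon> > 0" and sub: "\<forall>y\<in>W. mball_of (F y) (sg y) \<epsilon> \<subseteq> {a. (y, a) \<in> C}"
        using H \<mu>uf conv xgC rep by blast
      have 1: "Sigma (topspace X) (\<lambda>y. mball_of (F y) (sg y) \<epsilon>) \<in> \<eta>" using tc W(2) by blast
      have 2: "{s\<in>E. fst s \<in> W} \<in> \<eta>" using W(1) unfolding \<mu>_def pf_mem by blast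
      have "Sigma (topspace X) (\<lambda>y. mball_of (F y) (sg y) \<epsilon>) \<inter> {s\<in>E. fst s \<in> W} \<subseteq> C"
        using sub by auto
      then show "C \<in> \<eta>" using uf_mono[OF \<eta> uf_int[OF \<eta> 1 2]] CE by blast
    qed
  qed
qed

end
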